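(* Each arc component of $\mathbb G$ is dense in $\mathbb G$.
   Context: A graph is a pair $A=(V(A),E(A))$ with $E(A)\subseteq V(A)^2$ reflexive and symmetric; a topological graph additionally has $V$ compact, second countable, zero-dimensional and $E$ closed; subgraphs carry the induced edge relation. Epimorphisms are (continuous) edge-preserving maps surjective on vertices and edges. A vertex set $S$ is disconnected if it splits into two nonempty closed subsets with no edges between them; otherwise connected; components are maximal connected subsets. An epimorphism $f\colon A\to B$ is confluent if for every connected $Q\subseteq V(B)$ each component $C$ of $f^{-1}(Q)$ has $f(C)=Q$. $\mathbb G$ is the projective Fraïssé limit of the class of finite connected graphs with confluent epimorphisms: the unique topological graph such that (1) every finite connected graph is a confluent epimorphic image of $\mathbb G$; (2) for finite connected $A,B$ and confluent epimorphisms $f\colon\mathbb G\to A$, $g\colon B\to A$ there is a confluent epimorphism $h\colon\mathbb G\to B$ with $f=g\circ h$; (3) for each $\varepsilon>0$ some confluent epimorphism from $\mathbb G$ onto a finite connected graph has all point-preimages of diameter $<\varepsilon$. A topological graph $G$ is an arc if it is connected and there are at most two vertices $a,b$ such that for every $x\in V(G)\setminus\{a,b\}$ the graph $G\setminus\{x\}$ is not connected (a single vertex is an arc). The arc component of a vertex $p$ of $G$ is the union of all subgraphs of $G$ that are arcs and contain $p$. *)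

theory Defs
  imports "HOL-Analysis.Analysis"
begin

definition is_graph :: "'a set \<Rightarrow> ('a \<times> 'a) set \<Rightarrow> bool" where
  "is_graph V E \<longleftrightarrow> E \<subseteq> V \<times> V \<and> (\<forall>x\<in>V. (x, x) \<in> E) \<and> (\<forall>x y. (x, y) \<in> E \<longrightarrow> (y, x) \<in> E)"

definition topological_graph :: "'a topology \<Rightarrow> ('a \<times> 'a) set \<Rightarrow> bool" where
  "topological_graph T E \<longleftrightarrow> is_graph (topspace T) E \<and> compact_space T \<and> second_countable T
     \<and> T dim_le 0 \<and> closedin (prod_topology T T) E"

definition gconnected :: "'a topology \<Rightarrow> ('a \<times> 'a) set \<Rightarrow> 'a set \<Rightarrow> bool" where
  "gconnected T E S \<longleftrightarrow> \<not> (\<exists>P Q. P \<noteq> {} \<and> Q \<noteq> {} \<and> P \<union> Q = S \<and> P \<inter> Q = {}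
      \<and> closedin (subtopology T S) P \<and> closedin (subtopology T S) Q
      \<and> (\<forall>x\<in>P. \<forall>y\<in>Q. (x, y) \<notin> E))"

definition gcomponent :: "'a topology \<Rightarrow> ('a \<times> 'a) set \<Rightarrow> 'a set \<Rightarrow> 'a set \<Rightarrow> bool" where
  "gcomponent T E S C \<longleftrightarrow> C \<subseteq> S \<and> gconnected T E C
     \<and> (\<forall>D. C \<subseteq> D \<and> D \<subseteq> S \<and> gconnected T E D \<longrightarrow> D = C)"

definition epimorphism :: "'a topology \<Rightarrow> ('a \<times> 'a) set \<Rightarrow> 'b topology \<Rightarrow> ('b \<times> 'b) set
    \<Rightarrow> ('a \<Rightarrow> 'b) \<Rightarrow> bool" where
  "epimorphism T E T' E' f \<longleftrightarrow> continuous_map T T' f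
     \<and> (\<forall>x y. (x, y) \<in> E \<longrightarrow> (f x, f y) \<in> E')
     \<and> f ` topspace T = topspace T'
     \<and> (\<lambda>(x, y). (f x, f y)) ` E = E'"

definition confluent :: "'a topology \<Rightarrow> ('a \<times> 'a) set \<Rightarrow> 'b topology \<Rightarrow> ('b \<times> 'b) set
    \<Rightarrow> ('a \<Rightarrow> 'b) \<Rightarrow> bool" where
  "confluent T E T' E' f \<longleftrightarrow> epimorphism T E T' E' f
     \<and> (\<forall>Q. Q \<subseteq> topspace T' \<and> gconnected T' E' Q \<longrightarrow>
          (\<forall>C. gcomponent T E {x \<in> topspace T. f x \<in> Q} C \<longrightarrow> f ` C = Q))"

text \<open>Finite connected graphs (nonempty), with vertices taken w.l.o.g. in nat and the
  discrete topology.\<close>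
definition fin_conn_graph :: "nat set \<Rightarrow> (nat \<times> nat) set \<Rightarrow> bool" where
  "fin_conn_graph A EA \<longleftrightarrow> finite A \<and> A \<noteq> {} \<and> is_graph A EA
     \<and> gconnected (discrete_topology A) EA A"

text \<open>The characterizing properties (1)-(3) of the projective Fraisse limit G of finite
  connected graphs with confluent epimorphisms; V carries the subspace topology of a
  metric type (used for diameters).\<close>
definition is_fraisse_G :: "'a::metric_space set \<Rightarrow> ('a \<times> 'a) set \<Rightarrow> bool" where
  "is_fraisse_G V E \<longleftrightarrow> topological_graph (top_of_set V) E
   \<and> (\<forall>A EA. fin_conn_graph A EA \<longrightarrow>
        (\<exists>f. confluent (top_of_set V) E (discrete_topology A) EA f))
   \<and> (\<forall>A EA B EB f g. fin_conn_graph A EA \<and> fin_conn_graph B EB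
        \<and> confluent (top_of_set V) E (discrete_topology A) EA f
        \<and> confluent (discrete_topology B) EB (discrete_topology A) EA g
        \<longrightarrow> (\<exists>h. confluent (top_of_set V) E (discrete_topology B) EB h
                 \<and> (\<forall>x\<in>V. f x = g (h x))))
   \<and> (\<forall>\<epsilon>>0. \<exists>A EA f. fin_conn_graph A EA
        \<and> confluent (top_of_set V) E (discrete_topology A) EA f
        \<and> (\<forall>a\<in>A. diameter {x \<in> V. f x = a} < \<epsilon>))"

definition is_arc :: "'a topology \<Rightarrow> ('a \<times> 'a) set \<Rightarrow> 'a set \<Rightarrow> bool" where
  "is_arc T E S \<longleftrightarrow> S \<subseteq> topspace T \<and> closedin T S \<and> gconnected T E S
     \<and> (\<exists>a b. \<forall>x \<in> S - {a, b}. \<not> gconnected T E (S - {x}))"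

definition arc_component :: "'a topology \<Rightarrow> ('a \<times> 'a) set \<Rightarrow> 'a \<Rightarrow> 'a set" where
  "arc_component T E p = \<Union> {S. is_arc T E S \<and> p \<in> S}"

end

theory Submission
  imports Defs
begin

lemma cm_maps:
  assumes "continuous_map (top_of_set V) (discrete_topology A) f" "x \<in> V"
  shows "f x \<in> A"
  using assms continuous_map_image_subset_topspace by fastforce

lemma cm_pre_eq:
  assumes "continuous_map (top_of_set V) (discrete_topology A) f"
  shows "{x\<in>V. f x \<in> B} = {x \<in> topspace (top_of_set V). f x \<in> B \<inter> A}"
  using cm_maps[OF assms] by auto

lemma cm_openin:
  assumes "continuous_map (top_of_set V) (discrete_topology A) f"
  shows "openin (top_of_set V) {x\<in>V. f x \<in> B}"
  unfolding cm_pre_eq[OF assms]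
  by (rule openin_continuous_map_preimage[OF assms]) simp

lemma cm_closedin:
  assumes "continuous_map (top_of_set V) (discrete_topology A) f"
  shows "closedin (top_of_set V) {x\<in>V. f x \<in> B}"
  unfolding cm_pre_eq[OF assms]
  by (rule closedin_continuous_map_preimage[OF assms]) simp

lemma cm_closed:
  assumes "continuous_map (top_of_set V) (discrete_topology A) f" "closed V"
  shows "closed {x\<in>V. f x \<in> B}"
  using cm_closedin[OF assms(1)] assms(2) closedin_closed_trans by blast

lemma sep_compact:
  fixes S T :: "'a::metric_space set"
  assumes "compact S" "compact T" "S \<inter> T = {}"
  shows "\<exists>d>0. \<forall>x\<in>S. \<forall>y\<in>T. d \<le> dist x y"
proof (cases "S = {} \<or> T = {}")
  case True then show ?thesis by (auto intro!: exI[of _ 1])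
next
  case False
  have c: "compact (S \<times> T)" using assms compact_Times by blast
  have "continuous_on (S \<times> T) (\<lambda>z. dist (fst z) (snd z))"
    by (intro continuous_intros)
  then obtain z where z: "z \<in> S \<times> T" "\<forall>w\<in>S\<times>T. dist (fst z) (snd z) \<le> dist (fst w) (snd w)"
    using continuous_attains_inf[OF c] False by blast
  have "fst z \<noteq> snd z" using z(1) assms(3) by auto
  then have "dist (fst z) (snd z) > 0" by simp
  then show ?thesis using z(2) by (intro exI[of _ "dist (fst z) (snd z)"]) force
qed

lemma fraisse_compact:
  assumes "is_fraisse_G V E" shows "compact V"
  using assms unfolding is_fraisse_G_def topological_graph_def compact_space_def
  by (simp add: compactin_subtopology)

lemma fraisse_graph:
  assumes "is_fraisse_G V E" shows "is_graph V E"
  using assms unfolding is_fraisse_G_def topological_graph_def by simp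

lemma fraisse_E_compact:
  assumes "is_fraisse_G V E" shows "compact E"
proof -
  have "closedin (prod_topology (top_of_set V) (top_of_set V)) E"
    using assms unfolding is_fraisse_G_def topological_graph_def by simp
  then have "closedin (top_of_set (V \<times> V)) E"
    by (simp add: subtopology_Times[symmetric])
  moreover have "compact (V \<times> V)" using fraisse_compact[OF assms] compact_Times by blast
  ultimately show ?thesis using closedin_compact by blast
qed

lemma gconnectedD:
  assumes "gconnected T E S" "P \<union> Q = S" "P \<inter> Q = {}" "closedin (subtopology T S) P"
    "closedin (subtopology T S) Q" "\<forall>x\<in>P. \<forall>y\<in>Q. (x, y) \<notin> E"
  shows "P = {} \<or> Q = {}"
  using assms unfolding gconnected_def by blast

lemma gconnectedI:
  assumes "\<And>P Q. P \<union> Q = S \<Longrightarrow> P \<inter> Q = {} \<Longrightarrow> closedin (subtopology T S) P \<Longrightarrow>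
    closedin (subtopology T S) Q \<Longrightarrow> \<forall>x\<in>P. \<forall>y\<in>Q. (x, y) \<notin> E \<Longrightarrow> P = {} \<or> Q = {}"
  shows "gconnected T E S"
  using assms unfolding gconnected_def by blast

lemma closedin_sub_Int:
  assumes "closedin (subtopology T S) P" "D \<subseteq> S"
  shows "closedin (subtopology T D) (P \<inter> D)"
proof -
  obtain C where C: "closedin T C" "P = C \<inter> S" using assms(1) closedin_subtopology by metis
  have "P \<inter> D = C \<inter> D" using C(2) assms(2) by blast
  then show ?thesis using C(1) closedin_subtopology by metis
qed

lemma gconnected_Union:
  assumes "\<And>D. D \<in> \<D> \<Longrightarrow> gconnected T E D" "\<And>D. D \<in> \<D> \<Longrightarrow> x \<in> D"
  shows "gconnected T E (\<Union>\<D>)"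
proof (rule gconnectedI)
  fix P Q
  assume PQ: "P \<union> Q = \<Union>\<D>" "P \<inter> Q = {}"
    and cP: "closedin (subtopology T (\<Union>\<D>)) P" and cQ: "closedin (subtopology T (\<Union>\<D>)) Q"
    and ne: "\<forall>x\<in>P. \<forall>y\<in>Q. (x, y) \<notin> E"
  have split: "P \<inter> D = {} \<or> Q \<inter> D = {}" if D: "D \<in> \<D>" for D
  proof (rule gconnectedD[OF assms(1)[OF D]])
    show "closedin (subtopology T D) (P \<inter> D)" using closedin_sub_Int[OF cP] D by blast
    show "closedin (subtopology T D) (Q \<inter> D)" using closedin_sub_Int[OF cQ] D by blast
    show "(P \<inter> D) \<union> (Q \<inter> D) = D" using PQ D by blast
    show "(P \<inter> D) \<inter> (Q \<inter> D) = {}" using PQ by blast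
    show "\<forall>x\<in>P \<inter> D. \<forall>y\<in>Q \<inter> D. (x, y) \<notin> E" using ne by blast
  qed
  show "P = {} \<or> Q = {}"
  proof (cases "\<D> = {}")
    case True then show ?thesis using PQ by auto
  next
    case False
    then obtain D0 where "D0 \<in> \<D>" by blast
    then have xU: "x \<in> \<Union>\<D>" using assms(2) by blast
    show ?thesis
    proof (cases "x \<in> P")
      case True
      then have "Q \<inter> D = {}" if "D \<in> \<D>" for D using split[OF that] assms(2)[OF that] by blast
      then show ?thesis using PQ by blast
    next
      case False
      then have "x \<in> Q" using xU PQ by blast
      then have "P \<inter> D = {}" if "D \<in> \<D>" for D using split[OF that] assms(2)[OF that] by blast
      then show ?thesis using PQ by blast
    qed
  qed
qed

lemma gconnected_sing: "gconnected T E {x}"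
proof (rule gconnectedI)
  fix P Q :: "'a set" assume "P \<union> Q = {x}" "P \<inter> Q = {}"
  then have "Q \<subseteq> {x}" "P \<subseteq> {x}" by blast+
  show "P = {} \<or> Q = {}"
  proof (cases "x \<in> P")
    case True
    then have "x \<notin> Q" using \<open>P \<inter> Q = {}\<close> by blast
    then show ?thesis using \<open>Q \<subseteq> {x}\<close> by blast
  next
    case False
    then show ?thesis using \<open>P \<subseteq> {x}\<close> by blast
  qed
qed

lemma exists_component:
  assumes "x \<in> S"
  shows "\<exists>C. gcomponent T E S C \<and> x \<in> C"
proof -
  define \<D> where "\<D> = {D. D \<subseteq> S \<and> x \<in> D \<and> gconnected T E D}"
  define C where "C = \<Union>\<D>"
  have "gconnected T E C" unfolding C_def
    by (rule gconnected_Union[where x=x]) (simp_all add: \<D>_def)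
  moreover have "{x} \<in> \<D>" unfolding \<D>_def using assms gconnected_sing by simp
  then have "x \<in> C" unfolding C_def by blast
  moreover have "C \<subseteq> S" unfolding C_def \<D>_def by blast
  moreover have "D = C" if "C \<subseteq> D" "D \<subseteq> S" "gconnected T E D" for D
  proof -
    have "D \<in> \<D>" unfolding \<D>_def using that \<open>x \<in> C\<close> by blast
    then have "D \<subseteq> C" unfolding C_def by blast
    then show ?thesis using that(1) by blast
  qed
  ultimately show ?thesis unfolding gcomponent_def by blast
qed

definition good :: "('v \<times> 'v) set \<Rightarrow> 'v set \<Rightarrow> ('v \<Rightarrow> nat) \<Rightarrow> 'v \<Rightarrow> 'v list \<Rightarrow> bool" where
  "good E D \<rho> v W \<longleftrightarrow> W \<noteq> [] \<and> W!0 = v \<and> set W \<subseteq> D \<and>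
     (\<forall>i. Suc i < length W \<longrightarrow> (W!i, W!Suc i) \<in> E \<and> \<rho> (W!i) \<le> \<rho> (W!Suc i) \<and> \<rho> (W!Suc i) \<le> Suc (\<rho> (W!i)))"

lemma good_snoc:
  assumes "good E D \<rho> v W" "(last W, z) \<in> E" "z \<in> D" "\<rho> (last W) \<le> \<rho> z" "\<rho> z \<le> Suc (\<rho> (last W))"
  shows "good E D \<rho> v (W @ [z])"
proof -
  have W: "W \<noteq> []" "W!0 = v" "set W \<subseteq> D"
    "\<And>i. Suc i < length W \<Longrightarrow> (W!i, W!Suc i) \<in> E \<and> \<rho> (W!i) \<le> \<rho> (W!Suc i) \<and> \<rho> (W!Suc i) \<le> Suc (\<rho> (W!i))"
    using assms(1) unfolding good_def by auto
  have lastW: "last W = W ! (length W - 1)" using W(1) by (simp add: last_conv_nth)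
  have a: "W @ [z] \<noteq> []" by simp
  have b: "(W @ [z]) ! 0 = v" using W(1,2) by (simp add: nth_append)
  have c: "set (W @ [z]) \<subseteq> D" using W(3) assms(3) by simp
  have d: "\<forall>i. Suc i < length (W @ [z]) \<longrightarrow> ((W @ [z]) ! i, (W @ [z]) ! Suc i) \<in> E \<and> \<rho> ((W @ [z]) ! i) \<le> \<rho> ((W @ [z]) ! Suc i) \<and>
          \<rho> ((W @ [z]) ! Suc i) \<le> Suc (\<rho> ((W @ [z]) ! i))"
  proof (intro allI impI)
    fix i assume i: "Suc i < length (W @ [z])"
    show "((W @ [z]) ! i, (W @ [z]) ! Suc i) \<in> E \<and> \<rho> ((W @ [z]) ! i) \<le> \<rho> ((W @ [z]) ! Suc i) \<and>
          \<rho> ((W @ [z]) ! Suc i) \<le> Suc (\<rho> ((W @ [z]) ! i))"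
    proof (cases "Suc i < length W")
      case True
      then show ?thesis using W(4)[OF True] by (simp add: nth_append)
    next
      case False
      then have "Suc i = length W" using i by simp
      then have "i = length W - 1" by simp
      then have "(W @ [z]) ! i = last W" "(W @ [z]) ! Suc i = z"
        using lastW \<open>Suc i = length W\<close> by (auto simp: nth_append)
      then show ?thesis using assms(2,4,5) by simp
    qed
  qed
  show ?thesis unfolding good_def using a b c d by blast
qed

lemma good_mono:
  assumes "good E D \<rho> v W" "i \<le> j" "j < length W"
  shows "\<rho> (W!i) \<le> \<rho> (W!j)"
  using assms(2,3)
proof (induction j)
  case 0 then show ?case by simp
next
  case (Suc j)
  show ?case
  proof (cases "i = Suc j")
    case True then show ?thesis by simp
  next
    case False
    then have "i \<le> j" using Suc.prems by simp
    then have "\<rho> (W!i) \<le> \<rho> (W!j)" using Suc by simp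
    moreover have "\<rho> (W!j) \<le> \<rho> (W!Suc j)" using assms(1) Suc.prems unfolding good_def by blast
    ultimately show ?thesis by simp
  qed
qed

lemma nth_splice:
  assumes "i < j" "j < length W" "k < Suc i + (length W - j)"
  shows "(take (Suc i) W @ drop j W) ! k = (if k < Suc i then W!k else W!(j + (k - Suc i)))"
proof -
  have lt: "length (take (Suc i) W) = Suc i" using assms by simp
  show ?thesis using assms by (auto simp: nth_append lt)
qed

lemma good_splice:
  assumes g: "good E D \<rho> v W" and ij: "i < j" "j < length W" and e: "(W!i, W!j) \<in> E"
    and r: "\<rho> (W!j) \<le> Suc (\<rho> (W!i))"
  shows "good E D \<rho> v (take (Suc i) W @ drop j W)"
    "last (take (Suc i) W @ drop j W) = last W"
    "length (take (Suc i) W @ drop j W) = Suc i + (length W - j)"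
proof -
  let ?W = "take (Suc i) W @ drop j W"
  have W: "W \<noteq> []" "W!0 = v" "set W \<subseteq> D"
    "\<And>i. Suc i < length W \<Longrightarrow> (W!i, W!Suc i) \<in> E \<and> \<rho> (W!i) \<le> \<rho> (W!Suc i) \<and> \<rho> (W!Suc i) \<le> Suc (\<rho> (W!i))"
    using g unfolding good_def by auto
  show len: "length ?W = Suc i + (length W - j)" using ij by simp
  show "last ?W = last W" using ij by simp
  have mono: "\<rho> (W!i) \<le> \<rho> (W!j)" using good_mono[OF g] ij by simp
  have a: "?W \<noteq> []" using ij by simp
  have b: "?W ! 0 = v" using nth_splice[OF ij, of 0] W(2) len ij by simp
  have c: "set ?W \<subseteq> D" using W(3) set_take_subset set_drop_subset by fastforce
  have d: "\<forall>k. Suc k < length ?W \<longrightarrow> (?W ! k, ?W ! Suc k) \<in> E \<and> \<rho> (?W ! k) \<le> \<rho> (?W ! Suc k) \<and> \<rho> (?W ! Suc k) \<le> Suc (\<rho> (?W ! k))"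
  proof (intro allI impI)
    fix k assume k: "Suc k < length ?W"
    have k1: "k < Suc i + (length W - j)" "Suc k < Suc i + (length W - j)" using k len by simp_all
    show "(?W ! k, ?W ! Suc k) \<in> E \<and> \<rho> (?W ! k) \<le> \<rho> (?W ! Suc k) \<and> \<rho> (?W ! Suc k) \<le> Suc (\<rho> (?W ! k))"
    proof (cases "Suc k < Suc i")
      case True
      then have "Suc k < length W" using ij by simp
      then show ?thesis using W(4) nth_splice[OF ij k1(1)] nth_splice[OF ij k1(2)] True by simp
    next
      case False
      show ?thesis
      proof (cases "k = i")
        case True
        then show ?thesis using nth_splice[OF ij k1(1)] nth_splice[OF ij k1(2)] e mono r by simp
      next
        case False
        then have ki: "k > i" using \<open>\<not> Suc k < Suc i\<close> by simp
        have "Suc (j + (k - Suc i)) < length W" using k1(2) ki ij by simp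
        moreover have "j + (Suc k - Suc i) = Suc (j + (k - Suc i))" using ki by simp
        ultimately show ?thesis using W(4) nth_splice[OF ij k1(1)] nth_splice[OF ij k1(2)] ki by simp
      qed
    qed
  qed
  show "good E D \<rho> v ?W" unfolding good_def using a b c d by blast
qed

lemma good_take:
  assumes g: "good E D \<rho> v W" and k: "k < length W"
  shows "good E D \<rho> v (take (Suc k) W)" "last (take (Suc k) W) = W!k"
proof -
  show "last (take (Suc k) W) = W!k" using k by (subst last_conv_nth) (auto simp: min_def intro: arg_cong[where f="(!) W"])
  show "good E D \<rho> v (take (Suc k) W)"
    using g k unfolding good_def
    by (auto simp: nth_take dest: in_set_takeD)
qed


lemma good_reach:
  assumes "(u, w) \<in> {(x, y). (x, y) \<in> E \<and> x \<in> D \<and> y \<in> D \<and> \<rho> y = \<rho> x}\<^sup>*"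
    "good E D \<rho> v W" "last W = u"
  shows "\<exists>W'. good E D \<rho> v W' \<and> last W' = w \<and> \<rho> w = \<rho> u"
  using assms(1)
proof (induction rule: rtrancl_induct)
  case base then show ?case using assms(2,3) by blast
next
  case (step y z)
  then obtain W' where W': "good E D \<rho> v W'" "last W' = y" "\<rho> y = \<rho> u" by blast
  have "good E D \<rho> v (W' @ [z])" using good_snoc[OF W'(1)] step(2) W'(2) by simp
  then show ?case using step(2) W' by auto
qed

lemma walk_lemma:
  assumes v: "v \<in> D" "\<rho> v = 0"
  and refl: "\<And>x. x \<in> D \<Longrightarrow> (x, x) \<in> E"
  and adj: "\<And>x y. x \<in> D \<Longrightarrow> y \<in> D \<Longrightarrow> (x, y) \<in> E \<Longrightarrow> \<rho> y \<le> Suc (\<rho> x)"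
  and prog: "\<And>u. u \<in> D \<Longrightarrow> \<rho> u < m \<Longrightarrow> \<exists>w w'.
      (u, w) \<in> {(x, y). (x, y) \<in> E \<and> x \<in> D \<and> y \<in> D \<and> \<rho> y = \<rho> x}\<^sup>* \<and> w' \<in> D \<and> (w, w') \<in> E \<and> \<rho> w' = Suc (\<rho> w)"
  shows "\<exists>W. good E D \<rho> v W \<and> \<rho> (last W) = m \<and> distinct W \<and>
     (\<forall>i j. i < j \<longrightarrow> j < length W \<longrightarrow> (W!i, W!j) \<in> E \<longrightarrow> j = Suc i)"
proof -
  have ex: "\<exists>W. good E D \<rho> v W \<and> \<rho> (last W) = k" if "k \<le> m" for k
    using that
  proof (induction k)
    case 0
    have "good E D \<rho> v [v]" unfolding good_def using v by simp
    then show ?case using v by (intro exI[of _ "[v]"]) simp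
  next
    case (Suc k)
    then obtain W where W: "good E D \<rho> v W" "\<rho> (last W) = k" by auto
    have "last W \<in> D" using W(1) unfolding good_def by auto
    then obtain w w' where ww: "(last W, w) \<in> {(x, y). (x, y) \<in> E \<and> x \<in> D \<and> y \<in> D \<and> \<rho> y = \<rho> x}\<^sup>*"
      "w' \<in> D" "(w, w') \<in> E" "\<rho> w' = Suc (\<rho> w)"
      using prog W(2) Suc.prems by force
    obtain W' where W': "good E D \<rho> v W'" "last W' = w" "\<rho> w = \<rho> (last W)"
      using good_reach[OF ww(1) W(1)] by blast
    have "good E D \<rho> v (W' @ [w'])" using good_snoc[OF W'(1)] W'(2) ww by simp
    then show ?case using ww(4) W' W(2) by (intro exI[of _ "W' @ [w']"]) simp
  qed
  let ?P = "\<lambda>W. good E D \<rho> v W \<and> \<rho> (last W) = m"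
  obtain W0 where "?P W0" using ex[OF order_refl] by blast
  then obtain W where W: "?P W" and min: "\<And>W'. ?P W' \<Longrightarrow> length W \<le> length W'"
    using ex_has_least_nat[of ?P W0 length] by blast
  have g: "good E D \<rho> v W" using W by blast
  have setD: "set W \<subseteq> D" using g unfolding good_def by blast
  have chord: "j = Suc i" if ij: "i < j" "j < length W" "(W!i, W!j) \<in> E" for i j
  proof (rule ccontr)
    assume "j \<noteq> Suc i"
    then have "Suc i < j" using ij by simp
    have "W!i \<in> D" "W!j \<in> D" using setD ij by auto
    then have r: "\<rho> (W!j) \<le> Suc (\<rho> (W!i))" using adj ij(3) by blast
    note sp = good_splice[OF g ij r]
    have "?P (take (Suc i) W @ drop j W)" using sp W by simp
    then have "length W \<le> Suc i + (length W - j)" using min sp(3) by metis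
    then show False using \<open>Suc i < j\<close> ij by simp
  qed
  have dist: "distinct W"
    unfolding distinct_conv_nth
  proof (intro allI impI)
    fix i j assume i: "i < length W" and j: "j < length W" and ne: "i \<noteq> j"
    show "W!i \<noteq> W!j"
    proof
      assume eq: "W!i = W!j"
      { fix a b assume ab: "a < b" "b < length W" "W!a = W!b"
        have False
        proof (cases "Suc b < length W")
          case True
          have ab1: "a < Suc b" "Suc b < length W" using ab True by simp_all
          have e: "(W!a, W!Suc b) \<in> E" using g True ab(3) unfolding good_def by auto
          have "\<rho> (W!Suc b) \<le> Suc (\<rho> (W!b))" using g True unfolding good_def by auto
          then have r: "\<rho> (W!Suc b) \<le> Suc (\<rho> (W!a))" using ab(3) by simp
          note sp = good_splice[OF g ab1 e r]
          have "?P (take (Suc a) W @ drop (Suc b) W)" using sp W by simp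
          then have "length W \<le> Suc a + (length W - Suc b)" using min sp(3) by metis
          then show False using ab True by simp
        next
          case False
          then have b: "b = length W - 1" using ab by simp
          have al: "a < length W" using ab by simp
          note tk = good_take[OF g al]
          have "W \<noteq> []" using ab by auto
          then have "last W = W!b" using b by (simp add: last_conv_nth)
          then have "?P (take (Suc a) W)" using tk W ab(3) by simp
          then have "length W \<le> length (take (Suc a) W)" using min by blast
          then show False using ab by simp
        qed }
      then show False using eq ne i j by (metis linorder_neqE_nat)
    qed
  qed
  show ?thesis using W dist chord by blast
qed



definition idx :: "'b list \<Rightarrow> 'b \<Rightarrow> nat" where
  "idx L y = (THE i. i < length L \<and> L!i = y)"

lemma idx_nth: "distinct L \<Longrightarrow> i < length L \<Longrightarrow> idx L (L!i) = i"
  unfolding idx_def by (rule the_equality) (auto simp: nth_eq_iff_index_eq)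

lemma idx_in: "distinct L \<Longrightarrow> y \<in> set L \<Longrightarrow> idx L y < length L \<and> L ! idx L y = y"
  by (metis idx_nth in_set_conv_nth)

locale levels =
  fixes V :: "'a::metric_space set" and E :: "('a \<times> 'a) set" and p :: 'a
    and f :: "nat \<Rightarrow> 'a \<Rightarrow> nat" and A :: "nat \<Rightarrow> nat set" and EA :: "nat \<Rightarrow> (nat \<times> nat) set"
    and L :: "nat \<Rightarrow> nat list"
  assumes cV: "compact V" and gE: "is_graph V E" and cE: "compact E"
    and cont: "\<And>n. continuous_map (top_of_set V) (discrete_topology (A n)) (f n)"
    and edge: "\<And>n x y. (x, y) \<in> E \<Longrightarrow> (f n x, f n y) \<in> EA n"
    and lift: "\<And>n a b. (a, b) \<in> EA n \<Longrightarrow> \<exists>x y. (x, y) \<in> E \<and> f n x = a \<and> f n y = b"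
    and mesh: "\<And>n x y. x \<in> V \<Longrightarrow> y \<in> V \<Longrightarrow> f n x = f n y \<Longrightarrow> dist x y < inverse (real (Suc n))"
    and Lne: "\<And>n. L n \<noteq> []" and Ldist: "\<And>n. distinct (L n)" and Lsurj: "\<And>n. set (L n) \<subseteq> f n ` V"
    and Lind: "\<And>n i j. i < length (L n) \<Longrightarrow> j < length (L n) \<Longrightarrow>
                 (L n ! i, L n ! j) \<in> EA n \<longleftrightarrow> (i \<le> Suc j \<and> j \<le> Suc i)"
    and pV: "p \<in> V" and L0: "\<And>n. L n ! 0 = f n p"
    and M1: "\<And>n x. x \<in> V \<Longrightarrow> f (Suc n) x \<in> set (L (Suc n)) \<Longrightarrow> f n x \<in> set (L n)"
    and M2: "\<And>n x y. x \<in> V \<Longrightarrow> y \<in> V \<Longrightarrow> f (Suc n) x \<in> set (L (Suc n)) \<Longrightarrow> f (Suc n) y \<in> set (L (Suc n))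
              \<Longrightarrow> idx (L (Suc n)) (f (Suc n) x) \<le> idx (L (Suc n)) (f (Suc n) y)
              \<Longrightarrow> idx (L n) (f n x) \<le> idx (L n) (f n y)"
    and M3: "\<And>n j. j < length (L n) \<Longrightarrow> \<exists>i < length (L (Suc n)). \<forall>x\<in>V. f (Suc n) x = L (Suc n) ! i \<longrightarrow> f n x = L n ! j"
begin

definition S where "S = {x \<in> V. \<forall>n. f n x \<in> set (L n)}"
definition pos where "pos n x = idx (L n) (f n x)"
definition prec where "prec x y \<longleftrightarrow> (\<exists>n. pos n x < pos n y)"

lemma S_V: "S \<subseteq> V" unfolding S_def by auto

lemma closedV: "closed V" using cV compact_imp_closed by blast

lemma S_closedin: "closedin (top_of_set V) S"
proof -
  have "S = \<Inter> (range (\<lambda>n. {x\<in>V. f n x \<in> set (L n)}))" unfolding S_def by auto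
  moreover have "closedin (top_of_set V) (\<Inter> (range (\<lambda>n. {x\<in>V. f n x \<in> set (L n)})))"
    by (rule closedin_Inter) (auto simp: cm_closedin[OF cont])
  ultimately show ?thesis by simp
qed

lemma S_compact: "compact S"
  using S_closedin cV closedin_compact by blast

lemma posS: "x \<in> S \<Longrightarrow> pos n x < length (L n) \<and> L n ! pos n x = f n x"
  unfolding S_def pos_def using idx_in[OF Ldist] by blast

lemma down: "x \<in> V \<Longrightarrow> f m x \<in> set (L m) \<Longrightarrow> k \<le> m \<Longrightarrow> f k x \<in> set (L k)"
proof (induction m)
  case 0 then show ?case by simp
next
  case (Suc m)
  show ?case
  proof (cases "k = Suc m")
    case True then show ?thesis using Suc.prems by simp
  next
    case False
    then have "k \<le> m" using Suc.prems by simp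
    moreover have "f m x \<in> set (L m)" using M1[OF Suc.prems(1,2)] .
    ultimately show ?thesis using Suc.IH Suc.prems(1) by blast
  qed
qed

lemma pS: "p \<in> S" and pos_p: "pos n p = 0"
proof -
  have "f n p \<in> set (L n)" for n using L0[of n] Lne[of n] by (metis length_greater_0_conv nth_mem)
  then show "p \<in> S" unfolding S_def using pV by simp
  show "pos n p = 0" unfolding pos_def using L0[of n] idx_nth[OF Ldist, of 0 n] Lne[of n] by simp
qed

lemma up:
  assumes "j < length (L n)"
  shows "\<exists>i' < length (L (n+i)). \<forall>x\<in>V. f (n+i) x = L (n+i) ! i' \<longrightarrow> f n x = L n ! j"
proof (induction i)
  case 0 then show ?case using assms by auto
next
  case (Suc i)
  then obtain i' where i': "i' < length (L (n+i))" "\<forall>x\<in>V. f (n+i) x = L (n+i) ! i' \<longrightarrow> f n x = L n ! j" by blast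
  obtain i'' where "i'' < length (L (Suc (n+i)))" "\<forall>x\<in>V. f (Suc (n+i)) x = L (Suc (n+i)) ! i'' \<longrightarrow> f (n+i) x = L (n+i) ! i'"
    using M3[OF i'(1)] by blast
  then have "\<forall>x\<in>V. f (n + Suc i) x = L (n + Suc i) ! i'' \<longrightarrow> f n x = L n ! j" using i'(2) by simp
  then show ?case using \<open>i'' < length (L (Suc (n+i)))\<close> by (intro exI[of _ i'']) simp
qed

lemma thread:
  assumes j: "j < length (L n)"
  shows "\<exists>x\<in>S. f n x = L n ! j"
proof -
  define K where "K i = {x\<in>V. f n x = L n ! j \<and> f (n+i) x \<in> set (L (n+i))}" for i
  have Kcl: "closed (K i)" for i
  proof -
    have "K i = {x\<in>V. f n x \<in> {L n ! j}} \<inter> {x\<in>V. f (n+i) x \<in> set (L (n+i))}" unfolding K_def by auto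
    moreover have "closed {x\<in>V. f n x \<in> {L n ! j}}" by (rule cm_closed[OF cont closedV])
    moreover have "closed {x\<in>V. f (n+i) x \<in> set (L (n+i))}" by (rule cm_closed[OF cont closedV])
    ultimately show ?thesis by (simp add: closed_Int)
  qed
  have Kne: "K i \<noteq> {}" for i
  proof -
    obtain i' where i': "i' < length (L (n+i))" "\<forall>x\<in>V. f (n+i) x = L (n+i) ! i' \<longrightarrow> f n x = L n ! j"
      using up[OF j] by blast
    have "L (n+i) ! i' \<in> f (n+i) ` V" using Lsurj i'(1) nth_mem by blast
    then obtain x where "x \<in> V" "f (n+i) x = L (n+i) ! i'" by auto
    then have "x \<in> K i" unfolding K_def using i' by (auto simp: nth_mem)
    then show ?thesis by blast
  qed
  have Kmono: "K i' \<subseteq> K i" if "i \<le> i'" for i i'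
  proof
    fix x assume "x \<in> K i'"
    then have x: "x \<in> V" "f n x = L n ! j" "f (n+i') x \<in> set (L (n+i'))" unfolding K_def by auto
    have "f (n+i) x \<in> set (L (n+i))" using down[OF x(1) x(3)] that by simp
    then show "x \<in> K i" unfolding K_def using x by simp
  qed
  have "V \<inter> \<Inter>(range K) \<noteq> {}"
  proof (rule compact_imp_fip[OF cV])
    show "closed T" if "T \<in> range K" for T using that Kcl by blast
    fix F' assume F': "finite F'" "F' \<subseteq> range K"
    then obtain I where I: "finite I" "F' = K ` I" by (meson finite_subset_image)
    define N where "N = (if I = {} then 0 else Max I)"
    have "K N \<subseteq> K i" if "i \<in> I" for i
    proof -
      have "i \<le> N" using that I(1) N_def by (auto intro: Max_ge)
      then show ?thesis using Kmono by blast
    qed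
    then have "K N \<subseteq> \<Inter>F'" using I by auto
    moreover have "K N \<subseteq> V" unfolding K_def by auto
    ultimately show "V \<inter> \<Inter>F' \<noteq> {}" using Kne[of N] by blast
  qed
  then obtain x where x: "x \<in> V" "\<And>i. x \<in> K i" by blast
  have "f m x \<in> set (L m)" for m
  proof (cases "n \<le> m")
    case True
    then have "n + (m - n) = m" by simp
    moreover have "f (n + (m - n)) x \<in> set (L (n + (m - n)))" using x(2)[of "m - n"] unfolding K_def by blast
    ultimately show ?thesis by simp
  next
    case False
    have "f (n + 0) x \<in> set (L (n + 0))" using x(2)[of 0] unfolding K_def by blast
    then show ?thesis using down[OF x(1), of n m] False by simp
  qed
  then have "x \<in> S" unfolding S_def using x by auto
  moreover have "f n x = L n ! j" using x(2)[of 0] unfolding K_def by auto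
  ultimately show ?thesis by blast
qed

lemma separate:
  assumes "x \<in> V" "y \<in> V" "x \<noteq> y"
  shows "\<exists>n. f n x \<noteq> f n y"
proof -
  have "dist x y > 0" using assms by simp
  then obtain n where n: "inverse (real (Suc n)) < dist x y" using reals_Archimedean by blast
  show ?thesis
  proof (rule ccontr)
    assume "\<not> (\<exists>n. f n x \<noteq> f n y)"
    then have "f n x = f n y" by blast
    then have "dist x y < inverse (real (Suc n))" using mesh[OF assms(1,2)] by blast
    then show False using n by simp
  qed
qed

lemma mono_down:
  assumes "x \<in> S" "y \<in> S" "k \<le> m" "pos m x \<le> pos m y"
  shows "pos k x \<le> pos k y"
  using assms(3,4)
proof (induction m)
  case 0 then show ?case by simp
next
  case (Suc m)
  show ?case
  proof (cases "k = Suc m")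
    case True then show ?thesis using Suc.prems by simp
  next
    case False
    have "pos m x \<le> pos m y"
      using M2[of x y m] assms(1,2) Suc.prems(2) unfolding S_def pos_def by blast
    then show ?thesis using Suc False by simp
  qed
qed

lemma eventually_lt:
  assumes "x \<in> S" "y \<in> S" "pos n x < pos n y" "n \<le> m"
  shows "pos m x < pos m y"
  using mono_down[OF assms(2,1) assms(4)] assms(3) by (meson not_le)

lemma total:
  assumes "x \<in> S" "y \<in> S" "x \<noteq> y"
  shows "prec x y \<or> prec y x"
proof -
  obtain n where "f n x \<noteq> f n y" using separate assms S_V by blast
  moreover have "L n ! pos n x = f n x" "L n ! pos n y = f n y" using posS assms(1,2) by blast+
  ultimately have "pos n x \<noteq> pos n y" by auto
  then show ?thesis unfolding prec_def by (meson linorder_neqE_nat)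
qed

lemma asym:
  assumes "x \<in> S" "y \<in> S" "prec x y" shows "\<not> prec y x"
proof
  assume "prec y x"
  then obtain m where m: "pos m y < pos m x" unfolding prec_def by blast
  obtain n where n: "pos n x < pos n y" using assms(3) unfolding prec_def by blast
  have "pos (max m n) x < pos (max m n) y" using eventually_lt[OF assms(1,2) n] by simp
  moreover have "pos (max m n) y < pos (max m n) x" using eventually_lt[OF assms(2,1) m] by simp
  ultimately show False by simp
qed


lemma open_idx:
  assumes W: "W \<subseteq> S"
  shows "openin (subtopology (top_of_set V) W) {y\<in>W. \<exists>n. R n (pos n y)}"
proof -
  define Op where "Op = (\<Union>n. {y\<in>V. f n y \<in> {L n ! i | i. R n i \<and> i < length (L n)}})"
  have "openin (top_of_set V) Op" unfolding Op_def
  proof (rule openin_Union)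
    fix T assume "T \<in> range (\<lambda>n. {y\<in>V. f n y \<in> {L n ! i | i. R n i \<and> i < length (L n)}})"
    then obtain n where "T = {y\<in>V. f n y \<in> {L n ! i | i. R n i \<and> i < length (L n)}}" by blast
    then show "openin (top_of_set V) T" by (simp only: cm_openin[OF cont])
  qed
  moreover have "{y\<in>W. \<exists>n. R n (pos n y)} = Op \<inter> W"
  proof (intro equalityI subsetI)
    fix y assume y: "y \<in> {y\<in>W. \<exists>n. R n (pos n y)}"
    then obtain n where n: "R n (pos n y)" "y \<in> W" by blast
    then have "y \<in> S" using W by blast
    then have "pos n y < length (L n)" "L n ! pos n y = f n y" using posS by blast+
    then have "f n y = L n ! pos n y \<and> R n (pos n y) \<and> pos n y < length (L n)" using n by simp
    then have "f n y \<in> {L n ! i | i. R n i \<and> i < length (L n)}" by blast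
    moreover have "y \<in> V" using \<open>y \<in> S\<close> S_V by blast
    ultimately have "y \<in> Op" unfolding Op_def by blast
    then show "y \<in> Op \<inter> W" using n by blast
  next
    fix y assume y: "y \<in> Op \<inter> W"
    then obtain n i where ni: "f n y = L n ! i" "R n i" "i < length (L n)" unfolding Op_def by blast
    then have "pos n y = i" unfolding pos_def using idx_nth[OF Ldist] by simp
    then show "y \<in> {y\<in>W. \<exists>n. R n (pos n y)}" using y ni by blast
  qed
  ultimately show ?thesis unfolding openin_subtopology by (intro exI[of _ Op]) simp
qed

lemma cut:
  assumes x: "x \<in> S" "x \<noteq> p" and z: "z \<in> S" "prec x z"
  shows "\<not> gconnected (top_of_set V) E (S - {x})"
proof
  assume conn: "gconnected (top_of_set V) E (S - {x})"
  define P where "P = {y\<in>S - {x}. \<exists>n. pos n y < pos n x}"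
  define Q where "Q = {y\<in>S - {x}. \<exists>n. pos n x < pos n y}"
  let ?T = "subtopology (top_of_set V) (S - {x})"
  have top: "topspace ?T = S - {x}" using S_V by auto
  have oP: "openin ?T P" unfolding P_def by (rule open_idx) blast
  have oQ: "openin ?T Q" unfolding Q_def by (rule open_idx) blast
  have un: "P \<union> Q = S - {x}"
  proof
    show "P \<union> Q \<subseteq> S - {x}" unfolding P_def Q_def by blast
    show "S - {x} \<subseteq> P \<union> Q"
    proof
      fix y assume y: "y \<in> S - {x}"
      then have "prec y x \<or> prec x y" using total x(1) by blast
      then show "y \<in> P \<union> Q" using y unfolding P_def Q_def prec_def by blast
    qed
  qed
  have int: "P \<inter> Q = {}"
  proof (rule ccontr)
    assume "P \<inter> Q \<noteq> {}"
    then obtain y where "y \<in> P" "y \<in> Q" by blast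
    then have "y \<in> S" "prec y x" "prec x y" unfolding P_def Q_def prec_def by blast+
    then show False using asym x(1) by blast
  qed
  have e1: "topspace ?T - P = Q" using un int top by blast
  have e2: "topspace ?T - Q = P" using un int top by blast
  have cP: "closedin ?T P"
    unfolding closedin_def using oQ e1 un top by auto
  have cQ: "closedin ?T Q"
    unfolding closedin_def using oP e2 un top by auto
  have ne: "\<forall>y\<in>P. \<forall>w\<in>Q. (y, w) \<notin> E"
  proof (intro ballI notI)
    fix y w assume y: "y \<in> P" and w: "w \<in> Q" and e: "(y, w) \<in> E"
    obtain n1 where n1: "pos n1 y < pos n1 x" and yS: "y \<in> S" using y unfolding P_def by blast
    obtain n2 where n2: "pos n2 x < pos n2 w" and wS: "w \<in> S" using w unfolding Q_def by blast
    define N where "N = max n1 n2"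
    have a: "pos N y < pos N x" using eventually_lt[OF yS x(1) n1] N_def by simp
    have b: "pos N x < pos N w" using eventually_lt[OF x(1) wS n2] N_def by simp
    have "(f N y, f N w) \<in> EA N" using edge e by blast
    moreover have 1: "pos N y < length (L N)" "L N ! pos N y = f N y" using posS yS by blast+
    moreover have 2: "pos N w < length (L N)" "L N ! pos N w = f N w" using posS wS by blast+
    ultimately have "(L N ! pos N y, L N ! pos N w) \<in> EA N" by simp
    then have "pos N y \<le> Suc (pos N w) \<and> pos N w \<le> Suc (pos N y)" using Lind[OF 1(1) 2(1)] by blast
    then have "pos N w \<le> Suc (pos N y)" by blast
    then show False using a b by simp
  qed
  have "P \<noteq> {}"
  proof -
    obtain n where "f n p \<noteq> f n x" using separate pV x S_V by blast
    moreover have "L n ! pos n x = f n x" using posS x(1) by blast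
    ultimately have "pos n x \<noteq> 0" using L0[of n] by (metis)
    then have "pos n p < pos n x" using pos_p by simp
    then show ?thesis unfolding P_def using pS x(2) by blast
  qed
  moreover have "Q \<noteq> {}"
  proof -
    have "z \<noteq> x"
    proof
      assume "z = x"
      then show False using asym[OF x(1) x(1)] z(2) by simp
    qed
    moreover obtain n where "pos n x < pos n z" using z(2) unfolding prec_def by blast
    ultimately show ?thesis unfolding Q_def using z(1) by blast
  qed
  ultimately show False using gconnectedD[OF conn un int cP cQ ne] by blast
qed


lemma dist_pair_le:
  fixes a c :: "'b::metric_space" and b d :: "'c::metric_space"
  shows "dist (a, b) (c, d) \<le> dist a c + dist b d"
proof -
  have "dist (a, b) (c, d) = sqrt ((dist a c)\<^sup>2 + (dist b d)\<^sup>2)" by (simp add: dist_Pair_Pair)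
  also have "\<dots> \<le> sqrt ((dist a c)\<^sup>2) + sqrt ((dist b d)\<^sup>2)" by (rule sqrt_add_le_add_sqrt) simp_all
  also have "\<dots> = dist a c + dist b d" by simp
  finally show ?thesis .
qed

lemma change:
  assumes "j0 < len" "j1 < len" "(j0 \<in> J) \<noteq> (j1 \<in> J)"
  shows "\<exists>j. Suc j < len \<and> (j \<in> J) \<noteq> (Suc j \<in> J)"
proof (rule ccontr)
  assume "\<not> ?thesis"
  then have h: "\<And>j. Suc j < len \<Longrightarrow> (j \<in> J) = (Suc j \<in> J)" by blast
  have "\<And>j. j < len \<Longrightarrow> (j \<in> J) = (0 \<in> J)"
  proof -
    fix j show "j < len \<Longrightarrow> (j \<in> J) = (0 \<in> J)"
    proof (induction j)
      case 0 then show ?case by simp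
    next
      case (Suc j)
      then have "j < len" by simp
      then have "(j \<in> J) = (0 \<in> J)" using Suc.IH by blast
      moreover have "(j \<in> J) = (Suc j \<in> J)" using h Suc.prems by blast
      ultimately show ?case by simp
    qed
  qed
  then show False using assms by blast
qed

lemma S_conn: "gconnected (top_of_set V) E S"
proof (rule gconnectedI)
  fix P Q
  assume PQ: "P \<union> Q = S" "P \<inter> Q = {}"
    and cP: "closedin (subtopology (top_of_set V) S) P" and cQ: "closedin (subtopology (top_of_set V) S) Q"
    and ne: "\<forall>x\<in>P. \<forall>y\<in>Q. (x, y) \<notin> E"
  show "P = {} \<or> Q = {}"
  proof (rule ccontr)
    assume "\<not> (P = {} \<or> Q = {})"
    then obtain xP xQ where xP: "xP \<in> P" and xQ: "xQ \<in> Q" by blast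
    have sub: "subtopology (top_of_set V) S = top_of_set S"
      using S_V subtopology_subtopology[of euclidean V S] by (simp add: Int_absorb1)
    have "closedin (top_of_set S) P" using cP sub by simp
    then have Pc: "compact P" using closedin_compact[OF S_compact] by blast
    have "closedin (top_of_set S) Q" using cQ sub by simp
    then have Qc: "compact Q" using closedin_compact[OF S_compact] by blast
    obtain d1 where d1: "d1 > 0" "\<And>x y. x \<in> P \<Longrightarrow> y \<in> Q \<Longrightarrow> d1 \<le> dist x y"
      using sep_compact[OF Pc Qc PQ(2)] by blast
    have PQc: "compact (P \<times> Q)" using Pc Qc compact_Times by blast
    have EPQ: "E \<inter> (P \<times> Q) = {}" using ne by blast
    obtain d2 where d2: "d2 > 0" "\<And>e z. e \<in> E \<Longrightarrow> z \<in> P \<times> Q \<Longrightarrow> d2 \<le> dist e z"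
      using sep_compact[OF cE PQc EPQ] by blast
    have "min d1 (d2/2) > 0" using d1 d2 by simp
    then obtain n where n: "inverse (real (Suc n)) < min d1 (d2/2)" using reals_Archimedean by blast
    have fib: "dist x y < min d1 (d2/2)" if "x \<in> V" "y \<in> V" "f n x = f n y" for x y
      using mesh[OF that] n by linarith
    have PS: "P \<subseteq> S" and QS: "Q \<subseteq> S" using PQ by blast+
    define J where "J = {j. \<exists>x\<in>P. f n x = L n ! j}"
    have xPS: "xP \<in> S" using xP PS by blast
    have xQS: "xQ \<in> S" using xQ QS by blast
    have j0a: "pos n xP < length (L n)" and j0e: "L n ! pos n xP = f n xP" using posS[OF xPS] by blast+
    have j0b: "pos n xP \<in> J" unfolding J_def mem_Collect_eq using xP j0e by (intro bexI[of _ xP]) simp_all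
    note j0 = j0a j0b
    have j1: "pos n xQ < length (L n)" "pos n xQ \<notin> J"
    proof -
      show "pos n xQ < length (L n)" using posS[OF xQS] by blast
      show "pos n xQ \<notin> J"
      proof
        assume "pos n xQ \<in> J"
        then obtain x where x: "x \<in> P" "f n x = L n ! pos n xQ" unfolding J_def by blast
        then have "f n x = f n xQ" using posS[OF xQS] by simp
        moreover have "x \<in> V" "xQ \<in> V" using x(1) xQ PS QS S_V by blast+
        ultimately have "dist x xQ < min d1 (d2/2)" using fib by blast
        then have "dist x xQ < d1" by simp
        then show False using d1(2)[OF x(1) xQ] by simp
      qed
    qed
    obtain j where j: "Suc j < length (L n)" "(j \<in> J) \<noteq> (Suc j \<in> J)"
      using change[OF j0(1) j1(1)] j0(2) j1(2) by blast
    obtain u w where uw: "u < length (L n)" "w < length (L n)" "u \<in> J" "w \<notin> J"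
      "u \<le> Suc w" "w \<le> Suc u"
    proof (cases "j \<in> J")
      case True
      then show ?thesis using that[of j "Suc j"] j by simp
    next
      case False
      then show ?thesis using that[of "Suc j" j] j by simp
    qed
    obtain xu where xu: "xu \<in> P" "f n xu = L n ! u" using uw(3) unfolding J_def by blast
    obtain xw where xw: "xw \<in> S" "f n xw = L n ! w" using thread[OF uw(2)] by blast
    have "xw \<notin> P" using xw(2) uw(4) unfolding J_def by blast
    then have xwQ: "xw \<in> Q" using xw(1) PQ by blast
    have "(L n ! u, L n ! w) \<in> EA n" using Lind[OF uw(1) uw(2)] uw(5,6) by blast
    then obtain x' y' where e: "(x', y') \<in> E" "f n x' = L n ! u" "f n y' = L n ! w"
      using lift by blast
    have x'V: "x' \<in> V" and y'V: "y' \<in> V" using e(1) gE unfolding is_graph_def by blast+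
    have xuV: "xu \<in> V" using xu(1) PS S_V by blast
    have xwV: "xw \<in> V" using xw(1) S_V by blast
    have a: "dist x' xu < d2/2" using fib[OF x'V xuV] e(2) xu(2) by simp
    have b: "dist y' xw < d2/2" using fib[OF y'V xwV] e(3) xw(2) by simp
    have "dist (x', y') (xu, xw) \<le> dist x' xu + dist y' xw" by (rule dist_pair_le)
    also have "\<dots> < d2" using a b by simp
    finally have "dist (x', y') (xu, xw) < d2" .
    moreover have "d2 \<le> dist (x', y') (xu, xw)" using d2(2)[OF e(1)] xu(1) xwQ by blast
    ultimately show False by simp
  qed
qed

lemma S_arc: "is_arc (top_of_set V) E S"
proof -
  have "\<exists>b. \<forall>x\<in>S - {p, b}. \<not> gconnected (top_of_set V) E (S - {x})"
  proof (cases "\<exists>b\<in>S. \<forall>z\<in>S. \<not> prec b z")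
    case True
    then obtain b where b: "b \<in> S" "\<And>z. z \<in> S \<Longrightarrow> \<not> prec b z" by blast
    have "\<not> gconnected (top_of_set V) E (S - {x})" if x: "x \<in> S - {p, b}" for x
    proof -
      have "\<exists>z\<in>S. prec x z"
      proof (rule ccontr)
        assume nz: "\<not> (\<exists>z\<in>S. prec x z)"
        have "x \<noteq> b" "x \<in> S" using x by blast+
        then have "prec x b \<or> prec b x" using total b(1) by blast
        then show False using nz b(1) b(2)[OF \<open>x \<in> S\<close>] by blast
      qed
      then obtain z where "z \<in> S" "prec x z" by blast
      then show ?thesis using cut[of x z] x by blast
    qed
    then show ?thesis by blast
  next
    case False
    have "\<not> gconnected (top_of_set V) E (S - {x})" if x: "x \<in> S - {p, p}" for x
    proof -
      obtain z where "z \<in> S" "prec x z" using False x by blast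
      then show ?thesis using cut[of x z] x by blast
    qed
    then show ?thesis by blast
  qed
  then show ?thesis unfolding is_arc_def using S_V S_closedin S_conn by auto
qed


end


definition okf where
  "okf V E A EA f \<longleftrightarrow> fin_conn_graph A EA \<and> confluent (top_of_set V) E (discrete_topology A) EA f"

definition okL where
  "okL A EA f p L \<longleftrightarrow> L \<noteq> [] \<and> distinct L \<and> set L \<subseteq> A \<and> L!0 = f p \<and>
     (\<forall>i j. i < length L \<longrightarrow> j < length L \<longrightarrow> ((L!i, L!j) \<in> EA \<longleftrightarrow> (i \<le> Suc j \<and> j \<le> Suc i)))"

definition meshb where
  "meshb V f \<epsilon> \<longleftrightarrow> (\<forall>x\<in>V. \<forall>y\<in>V. f x = f y \<longrightarrow> dist x y < \<epsilon>)"

definition relL where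
  "relL V f L f' L' \<longleftrightarrow>
     (\<forall>x. x \<in> V \<longrightarrow> f' x \<in> set L' \<longrightarrow> f x \<in> set L) \<and>
     (\<forall>x y. x \<in> V \<longrightarrow> y \<in> V \<longrightarrow> f' x \<in> set L' \<longrightarrow> f' y \<in> set L' \<longrightarrow>
        idx L' (f' x) \<le> idx L' (f' y) \<longrightarrow> idx L (f x) \<le> idx L (f y)) \<and>
     (\<forall>j. j < length L \<longrightarrow> (\<exists>i < length L'. \<forall>x\<in>V. f' x = L' ! i \<longrightarrow> f x = L ! j))"

lemma conf_epi:
  assumes "confluent (top_of_set V) E (discrete_topology A) EA f"
  shows "continuous_map (top_of_set V) (discrete_topology A) f"
    "\<And>x y. (x, y) \<in> E \<Longrightarrow> (f x, f y) \<in> EA"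
    "f ` V = A"
    "\<And>a b. (a, b) \<in> EA \<Longrightarrow> \<exists>x y. (x, y) \<in> E \<and> f x = a \<and> f y = b"
proof -
  have e: "epimorphism (top_of_set V) E (discrete_topology A) EA f"
    using assms unfolding confluent_def by blast
  then show "continuous_map (top_of_set V) (discrete_topology A) f"
    "\<And>x y. (x, y) \<in> E \<Longrightarrow> (f x, f y) \<in> EA" "f ` V = A"
    unfolding epimorphism_def by auto
  fix a b assume "(a, b) \<in> EA"
  then have "(a, b) \<in> (\<lambda>(x, y). (f x, f y)) ` E" using e unfolding epimorphism_def by simp
  then show "\<exists>x y. (x, y) \<in> E \<and> f x = a \<and> f y = b" by auto
qed

lemma conf_comp:
  assumes "confluent (top_of_set V) E (discrete_topology A) EA f" "Q \<subseteq> A" "gconnected (discrete_topology A) EA Q"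
    "gcomponent (top_of_set V) E {x \<in> V. f x \<in> Q} C"
  shows "f ` C = Q"
proof -
  have "\<forall>Q. Q \<subseteq> topspace (discrete_topology A) \<and> gconnected (discrete_topology A) EA Q \<longrightarrow>
          (\<forall>C. gcomponent (top_of_set V) E {x \<in> topspace (top_of_set V). f x \<in> Q} C \<longrightarrow> f ` C = Q)"
    using assms(1) unfolding confluent_def by blast
  then show ?thesis using assms(2-4) by simp
qed

lemma gconnected_pair:
  assumes "(a, b) \<in> E" "(b, a) \<in> E"
  shows "gconnected T E {a, b}"
proof (rule gconnectedI)
  fix P Q assume PQ: "P \<union> Q = {a, b}" "P \<inter> Q = {}" and ne: "\<forall>x\<in>P. \<forall>y\<in>Q. (x, y) \<notin> E"
  show "P = {} \<or> Q = {}"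
  proof (rule ccontr)
    assume "\<not> (P = {} \<or> Q = {})"
    then obtain x y where xy: "x \<in> P" "y \<in> Q" by blast
    then have "x \<in> {a, b}" "y \<in> {a, b}" "x \<noteq> y" using PQ by blast+
    then have "(x, y) \<in> E" using assms by blast
    then show False using ne xy by blast
  qed
qed

lemma closedin_subI: "closedin U T \<Longrightarrow> S = T \<inter> W \<Longrightarrow> closedin (subtopology U W) S"
  unfolding closedin_subtopology by blast

lemma lebesgue:
  assumes "compact V" "continuous_map (top_of_set V) (discrete_topology A) f"
  shows "\<exists>e>0. \<forall>x\<in>V. \<forall>y\<in>V. dist x y < e \<longrightarrow> f x = f y"
proof -
  define \<G> where "\<G> = {T. open T \<and> (\<exists>a. V \<inter> T \<subseteq> {x\<in>V. f x = a})}"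
  have cov: "V \<subseteq> \<Union>\<G>"
  proof
    fix x assume x: "x \<in> V"
    have "openin (top_of_set V) {y\<in>V. f y \<in> {f x}}" by (rule cm_openin[OF assms(2)])
    then obtain T where T: "open T" "{y\<in>V. f y \<in> {f x}} = V \<inter> T" unfolding openin_open by blast
    then have "T \<in> \<G>" unfolding \<G>_def by auto
    moreover have "x \<in> T" using T(2) x by blast
    ultimately show "x \<in> \<Union>\<G>" by blast
  qed
  have op: "\<And>G. G \<in> \<G> \<Longrightarrow> open G" unfolding \<G>_def by blast
  obtain e where e: "0 < e" "\<And>x. x \<in> V \<Longrightarrow> \<exists>G\<in>\<G>. ball x e \<subseteq> G"
    using Heine_Borel_lemma[OF assms(1) cov op] by blast
  have "f x = f y" if xy: "x \<in> V" "y \<in> V" "dist x y < e" for x y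
  proof -
    obtain G where G: "G \<in> \<G>" "ball x e \<subseteq> G" using e(2) xy(1) by blast
    obtain a where a: "V \<inter> G \<subseteq> {x\<in>V. f x = a}" using G(1) unfolding \<G>_def by blast
    have "x \<in> ball x e" "y \<in> ball x e" using e(1) xy(3) by auto
    then have "x \<in> G" "y \<in> G" using G(2) by blast+
    then show ?thesis using a xy(1,2) by blast
  qed
  then show ?thesis using e(1) by blast
qed

lemma diam_mesh:
  assumes "compact V" "\<forall>a\<in>A. diameter {x \<in> V. f x = a} < \<epsilon>" "f ` V = A"
  shows "meshb V f \<epsilon>"
  unfolding meshb_def
proof (intro ballI impI)
  fix x y assume xy: "x \<in> V" "y \<in> V" "f x = f y"
  have fx: "f x \<in> A" using assms(3) xy(1) by blast
  have sub: "{z \<in> V. f z = f x} \<subseteq> V" by blast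
  have b: "bounded {z \<in> V. f z = f x}" by (rule bounded_subset[OF compact_imp_bounded[OF assms(1)] sub])
  have "x \<in> {z \<in> V. f z = f x}" "y \<in> {z \<in> V. f z = f x}" using xy by simp_all
  then have "dist x y \<le> diameter {z \<in> V. f z = f x}" using diameter_bounded_bound[OF b] by blast
  also have "\<dots> < \<epsilon>" using assms(2) fx by blast
  finally show "dist x y < \<epsilon>" .
qed

lemma ivt_walk:
  assumes g: "good E D \<rho> v W" and r0: "\<rho> (W!0) = 0" and k: "k < length W" "j \<le> \<rho> (W!k)"
  shows "\<exists>i\<le>k. \<rho> (W!i) = j"
  using k
proof (induction k)
  case 0 then show ?case using r0 by simp
next
  case (Suc k)
  show ?case
  proof (cases "j \<le> \<rho> (W!k)")
    case True
    moreover have "k < length W" using Suc.prems(1) by simp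
    ultimately obtain i where "i \<le> k" "\<rho> (W!i) = j" using Suc.IH by blast
    then show ?thesis by (intro exI[of _ i]) simp
  next
    case False
    have "\<rho> (W ! Suc k) \<le> Suc (\<rho> (W!k))" using g Suc.prems(1) unfolding good_def by blast
    then have "\<rho> (W ! Suc k) = j" using False Suc.prems(2) by simp
    then show ?thesis by blast
  qed
qed


lemma step_lemma:
  assumes G: "is_fraisse_G V E" and pV: "p \<in> V" and ok: "okf V E A EA f" and okl: "okL A EA f p L"
    and eps: "\<epsilon> > 0"
  shows "\<exists>A' EA' f' L'. okf V E A' EA' f' \<and> okL A' EA' f' p L' \<and> meshb V f' \<epsilon> \<and> relL V f L f' L'"
proof -
  have cV: "compact V" using fraisse_compact[OF G] .
  have conf: "confluent (top_of_set V) E (discrete_topology A) EA f" using ok unfolding okf_def by blast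
  note fe = conf_epi[OF conf]
  have Lprops: "L \<noteq> []" "distinct L" "set L \<subseteq> A" "L!0 = f p"
    "\<And>i j. i < length L \<Longrightarrow> j < length L \<Longrightarrow> ((L!i, L!j) \<in> EA \<longleftrightarrow> (i \<le> Suc j \<and> j \<le> Suc i))"
    using okl unfolding okL_def by blast+
  obtain e where e: "e > 0" "\<And>x y. x \<in> V \<Longrightarrow> y \<in> V \<Longrightarrow> dist x y < e \<Longrightarrow> f x = f y"
    using lebesgue[OF cV fe(1)] by blast
  have "min \<epsilon> e > 0" using e eps by simp
  then obtain A' EA' F where F: "fin_conn_graph A' EA'" "confluent (top_of_set V) E (discrete_topology A') EA' F"
    "\<forall>a\<in>A'. diameter {x \<in> V. F x = a} < min \<epsilon> e"
    using G unfolding is_fraisse_G_def by blast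
  note Fe = conf_epi[OF F(2)]
  have gA': "is_graph A' EA'" using F(1) unfolding fin_conn_graph_def by blast
  have EA'sub: "EA' \<subseteq> A' \<times> A'" and EA'refl: "\<And>x. x \<in> A' \<Longrightarrow> (x, x) \<in> EA'"
    and EA'sym: "\<And>x y. (x, y) \<in> EA' \<Longrightarrow> (y, x) \<in> EA'"
    using gA' unfolding is_graph_def by blast+
  have gA: "is_graph A EA" using ok unfolding okf_def fin_conn_graph_def by blast
  have EAsym: "\<And>x y. (x, y) \<in> EA \<Longrightarrow> (y, x) \<in> EA" using gA unfolding is_graph_def by blast
  have Fm: "meshb V F (min \<epsilon> e)" by (rule diam_mesh[OF cV F(3) Fe(3)])
  have FV: "\<And>x. x \<in> V \<Longrightarrow> F x \<in> A'" using Fe(3) by blast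
  have ff: "f x = f y" if "x \<in> V" "y \<in> V" "F x = F y" for x y
  proof -
    have "dist x y < min \<epsilon> e" using Fm that unfolding meshb_def by blast
    then show ?thesis using e(2) that by simp
  qed
  define g where "g b = f (SOME x. x \<in> V \<and> F x = b)" for b
  have gF: "g (F x) = f x" if "x \<in> V" for x
  proof -
    have "\<exists>y. y \<in> V \<and> F y = F x" using that by blast
    then have "(SOME y. y \<in> V \<and> F y = F x) \<in> V \<and> F (SOME y. y \<in> V \<and> F y = F x) = F x" by (rule someI_ex)
    then show ?thesis unfolding g_def using ff that by blast
  qed
  define D where "D = {w \<in> A'. g w \<in> set L}"
  define \<rho> where "\<rho> w = idx L (g w)" for w
  have Dprop: "\<rho> w < length L \<and> L ! \<rho> w = g w" if "w \<in> D" for w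
    using idx_in[OF Lprops(2)] that unfolding D_def \<rho>_def by blast
  have v: "F p \<in> D" "\<rho> (F p) = 0"
  proof -
    have "g (F p) = L!0" using gF[OF pV] Lprops(4) by simp
    moreover have "L!0 \<in> set L" using Lprops(1) by simp
    ultimately show "F p \<in> D" unfolding D_def using FV[OF pV] by simp
    show "\<rho> (F p) = 0" unfolding \<rho>_def using \<open>g (F p) = L!0\<close> idx_nth[OF Lprops(2)] Lprops(1) by simp
  qed
  have adj: "\<rho> y \<le> Suc (\<rho> x)" if xy: "x \<in> D" "y \<in> D" "(x, y) \<in> EA'" for x y
  proof -
    obtain x0 y0 where xy0: "(x0, y0) \<in> E" "F x0 = x" "F y0 = y" using Fe(4) xy(3) by blast
    have "x0 \<in> V" "y0 \<in> V" using xy0(1) fraisse_graph[OF G] unfolding is_graph_def by blast+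
    then have "g x = f x0" "g y = f y0" using gF xy0 by auto
    moreover have "(f x0, f y0) \<in> EA" using fe(2) xy0(1) by blast
    ultimately have "(L ! \<rho> x, L ! \<rho> y) \<in> EA" using Dprop xy by simp
    then show ?thesis using Lprops(5) Dprop xy by blast
  qed
  let ?R = "{(x, y). (x, y) \<in> EA' \<and> x \<in> D \<and> y \<in> D \<and> \<rho> y = \<rho> x}"
  have prog: "\<exists>w w'. (u, w) \<in> ?R\<^sup>* \<and> w' \<in> D \<and> (w, w') \<in> EA' \<and> \<rho> w' = Suc (\<rho> w)"
    if u: "u \<in> D" "\<rho> u < length L - 1" for u
  proof (rule ccontr)
    assume neg: "\<not> ?thesis"
    define i where "i = \<rho> u"
    define R where "R = {w. (u, w) \<in> ?R\<^sup>*}"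
    have Rprop: "w \<in> D \<and> \<rho> w = i" if "w \<in> R" for w
    proof -
      have "(u, w) \<in> ?R\<^sup>*" using that unfolding R_def by blast
      then show ?thesis
      proof (induction rule: rtrancl_induct)
        case base then show ?case using u i_def by simp
      next
        case (step y z) then show ?case by simp
      qed
    qed
    have uR: "u \<in> R" unfolding R_def by simp
    have i1: "Suc i < length L" using u i_def by simp
    have iL: "i < length L" using i1 by simp
    define c where "c = L ! i"
    define c' where "c' = L ! Suc i"
    have cc: "c \<noteq> c'" unfolding c_def c'_def using Lprops(2) i1 by (simp add: nth_eq_iff_index_eq)
    have cL: "c \<in> set L" "c' \<in> set L" unfolding c_def c'_def using i1 iL by simp_all
    have cA: "c \<in> A" "c' \<in> A" using cL Lprops(3) by blast+
    have cE: "(c, c') \<in> EA" unfolding c_def c'_def using Lprops(5)[OF iL i1] by simp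
    have Qc: "gconnected (discrete_topology A) EA {c, c'}" by (rule gconnected_pair[OF cE EAsym[OF cE]])
    have uA': "u \<in> A'" using u(1) unfolding D_def by blast
    obtain x0 where x0: "x0 \<in> V" "F x0 = u" using uA' Fe(3) by blast
    have fx0: "f x0 = c" using gF[OF x0(1)] x0(2) Dprop[OF u(1)] i_def c_def by simp
    obtain C where C: "gcomponent (top_of_set V) E {x \<in> V. f x \<in> {c, c'}} C" "x0 \<in> C"
      using exists_component[of x0 "{x \<in> V. f x \<in> {c, c'}}"] x0(1) fx0 by blast
    have fC: "f ` C = {c, c'}" using conf_comp[OF conf _ Qc C(1)] cA by blast
    have CV: "C \<subseteq> {x \<in> V. f x \<in> {c, c'}}" using C(1) unfolding gcomponent_def by blast
    have Cconn: "gconnected (top_of_set V) E C" using C(1) unfolding gcomponent_def by blast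
    define C1 where "C1 = {y \<in> C. F y \<in> R}"
    define C2 where "C2 = {y \<in> C. F y \<notin> R}"
    have cl1: "closedin (subtopology (top_of_set V) C) C1"
    proof -
      have eq: "C1 = {y \<in> V. F y \<in> R} \<inter> C" unfolding C1_def using CV by blast
      show ?thesis by (rule closedin_subI[OF cm_closedin[OF Fe(1)] eq])
    qed
    have cl2: "closedin (subtopology (top_of_set V) C) C2"
    proof -
      have eq: "C2 = {y \<in> V. F y \<in> - R} \<inter> C" unfolding C2_def using CV by blast
      show ?thesis by (rule closedin_subI[OF cm_closedin[OF Fe(1)] eq])
    qed
    have noe: "\<forall>y\<in>C1. \<forall>z\<in>C2. (y, z) \<notin> E"
    proof (intro ballI notI)
      fix y z assume y: "y \<in> C1" and z: "z \<in> C2" and yz: "(y, z) \<in> E"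
      have yR: "F y \<in> R" using y unfolding C1_def by blast
      have zR: "F z \<notin> R" using z unfolding C2_def by blast
      have zV: "z \<in> V" "f z \<in> {c, c'}" using z CV unfolding C2_def by blast+
      have e': "(F y, F z) \<in> EA'" using Fe(2) yz by blast
      have FyD: "F y \<in> D" "\<rho> (F y) = i" using Rprop[OF yR] by blast+
      have gz: "g (F z) = f z" using gF zV(1) by blast
      have "g (F z) \<in> set L" using gz zV(2) cL by auto
      then have FzD: "F z \<in> D" unfolding D_def using FV[OF zV(1)] by simp
      show False
      proof (cases "f z = c'")
        case True
        then have "\<rho> (F z) = Suc i" unfolding \<rho>_def using gz c'_def idx_nth[OF Lprops(2) i1] by simp
        have "(u, F y) \<in> ?R\<^sup>*" using yR unfolding R_def by simp
        then have "\<exists>w w'. (u, w) \<in> ?R\<^sup>* \<and> w' \<in> D \<and> (w, w') \<in> EA' \<and> \<rho> w' = Suc (\<rho> w)"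
          using FzD e' FyD(2) \<open>\<rho> (F z) = Suc i\<close> by blast
        then show False using neg by blast
      next
        case False
        then have "f z = c" using zV(2) by blast
        then have "\<rho> (F z) = i" unfolding \<rho>_def using gz c_def idx_nth[OF Lprops(2) iL] by simp
        then have "(F y, F z) \<in> ?R" using e' FyD FzD by simp
        then have "F z \<in> R" using yR unfolding R_def by (simp add: rtrancl_into_rtrancl)
        then show False using zR by blast
      qed
    qed
    have un: "C1 \<union> C2 = C" unfolding C1_def C2_def by blast
    have int: "C1 \<inter> C2 = {}" unfolding C1_def C2_def by blast
    have "x0 \<in> C1" unfolding C1_def using C(2) x0(2) uR by blast
    then have "C2 = {}" using gconnectedD[OF Cconn un int cl1 cl2 noe] by blast
    moreover have "c' \<in> f ` C" using fC by simp
    moreover obtain z where z: "z \<in> C" "f z = c'" using \<open>c' \<in> f ` C\<close> by blast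
    ultimately have "F z \<in> R" using un unfolding C1_def by blast
    then have "\<rho> (F z) = i" using Rprop by blast
    moreover have "z \<in> V" using z(1) CV by blast
    then have "\<rho> (F z) = Suc i" unfolding \<rho>_def using gF z(2) c'_def idx_nth[OF Lprops(2) i1] by simp
    ultimately show False by simp
  qed
  have DA': "D \<subseteq> A'" unfolding D_def by blast
  obtain W where W: "good EA' D \<rho> (F p) W" "\<rho> (last W) = length L - 1" "distinct W"
    "\<And>i j. i < j \<Longrightarrow> j < length W \<Longrightarrow> (W!i, W!j) \<in> EA' \<Longrightarrow> j = Suc i"
    using walk_lemma[of "F p" D \<rho> EA' "length L - 1", OF v EA'refl adj prog] DA' by blast
  have Wg: "W \<noteq> []" "W!0 = F p" "set W \<subseteq> D"
    "\<And>i. Suc i < length W \<Longrightarrow> (W!i, W!Suc i) \<in> EA' \<and> \<rho> (W!i) \<le> \<rho> (W!Suc i) \<and> \<rho> (W!Suc i) \<le> Suc (\<rho> (W!i))"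
    using W(1) unfolding good_def by blast+
  have okL': "okL A' EA' F p W"
    unfolding okL_def
  proof (intro conjI allI impI)
    show "W \<noteq> []" "distinct W" "W!0 = F p" using Wg W(3) by blast+
    show "set W \<subseteq> A'" using Wg(3) DA' by blast
    fix i j assume ij: "i < length W" "j < length W"
    show "(W!i, W!j) \<in> EA' \<longleftrightarrow> (i \<le> Suc j \<and> j \<le> Suc i)"
    proof
      assume e': "(W!i, W!j) \<in> EA'"
      show "i \<le> Suc j \<and> j \<le> Suc i"
      proof (cases i j rule: linorder_cases)
        case less then show ?thesis using W(4)[OF less ij(2) e'] by simp
      next
        case equal then show ?thesis by simp
      next
        case greater then show ?thesis using W(4)[OF greater ij(1) EA'sym[OF e']] by simp
      qed
    next
      assume a: "i \<le> Suc j \<and> j \<le> Suc i"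
      show "(W!i, W!j) \<in> EA'"
      proof (cases i j rule: linorder_cases)
        case less
        then have "j = Suc i" using a by simp
        then show ?thesis using Wg(4) ij by blast
      next
        case equal
        have "W!i \<in> A'" using ij(1) Wg(3) DA' nth_mem by blast
        then show ?thesis using equal EA'refl by simp
      next
        case greater
        then have "i = Suc j" using a by simp
        then show ?thesis using Wg(4) ij EA'sym by blast
      qed
    qed
  qed
  have WD: "\<And>k. k < length W \<Longrightarrow> W!k \<in> D" using Wg(3) nth_mem by blast
  have rel: "relL V f L F W"
    unfolding relL_def
  proof (intro conjI allI impI)
    fix x assume x: "x \<in> V" "F x \<in> set W"
    then have "F x \<in> D" using Wg(3) by blast
    then show "f x \<in> set L" using gF[OF x(1)] unfolding D_def by simp
  next
    fix x y assume xy: "x \<in> V" "y \<in> V" "F x \<in> set W" "F y \<in> set W" "idx W (F x) \<le> idx W (F y)"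
    have ix: "idx W (F x) < length W" "W ! idx W (F x) = F x" using idx_in[OF W(3) xy(3)] by blast+
    have iy: "idx W (F y) < length W" "W ! idx W (F y) = F y" using idx_in[OF W(3) xy(4)] by blast+
    have "\<rho> (W ! idx W (F x)) \<le> \<rho> (W ! idx W (F y))" using good_mono[OF W(1) xy(5) iy(1)] .
    then have "\<rho> (F x) \<le> \<rho> (F y)" using ix iy by simp
    then show "idx L (f x) \<le> idx L (f y)" unfolding \<rho>_def using gF xy(1,2) by simp
  next
    fix j assume j: "j < length L"
    have lW: "length W - 1 < length W" using Wg(1) by simp
    have lastW: "last W = W ! (length W - 1)" using Wg(1) by (simp add: last_conv_nth)
    have "j \<le> \<rho> (W ! (length W - 1))" using W(2) lastW j by simp
    moreover have "\<rho> (W!0) = 0" using Wg(2) v(2) by simp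
    ultimately obtain i where i: "i \<le> length W - 1" "\<rho> (W!i) = j" using ivt_walk[OF W(1) _ lW] by blast
    have il: "i < length W" using i(1) lW by simp
    have "\<forall>x\<in>V. F x = W ! i \<longrightarrow> f x = L ! j"
    proof (intro ballI impI)
      fix x assume x: "x \<in> V" "F x = W ! i"
      have "L ! \<rho> (W!i) = g (W!i)" using Dprop[OF WD[OF il]] by blast
      then show "f x = L ! j" using gF[OF x(1)] x(2) i(2) by simp
    qed
    then show "\<exists>i < length W. \<forall>x\<in>V. F x = W ! i \<longrightarrow> f x = L ! j" using il by blast
  qed
  have "okf V E A' EA' F" unfolding okf_def using F by blast
  moreover have "meshb V F \<epsilon>" using Fm unfolding meshb_def by fastforce
  ultimately show ?thesis using okL' rel by blast
qed



lemma base_lemma: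
  assumes G: "is_fraisse_G V E" and pV: "p \<in> V" and qV: "q \<in> V" and r: "r > 0"
  shows "\<exists>A EA f L. okf V E A EA f \<and> okL A EA f p L \<and> meshb V f (min r 1) \<and> last L = f q"
proof -
  have cV: "compact V" using fraisse_compact[OF G] .
  have "min r 1 > 0" using r by simp
  then obtain A EA F where F: "fin_conn_graph A EA" "confluent (top_of_set V) E (discrete_topology A) EA F"
    "\<forall>a\<in>A. diameter {x \<in> V. F x = a} < min r 1"
    using G unfolding is_fraisse_G_def by blast
  note Fe = conf_epi[OF F(2)]
  have gA: "is_graph A EA" and Aconn: "gconnected (discrete_topology A) EA A"
    using F(1) unfolding fin_conn_graph_def by blast+
  have EAsub: "EA \<subseteq> A \<times> A" and EArefl: "\<And>x. x \<in> A \<Longrightarrow> (x, x) \<in> EA"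
    and EAsym: "\<And>x y. (x, y) \<in> EA \<Longrightarrow> (y, x) \<in> EA"
    using gA unfolding is_graph_def by blast+
  have Fm: "meshb V F (min r 1)" by (rule diam_mesh[OF cV F(3) Fe(3)])
  have okf: "okf V E A EA F" unfolding okf_def using F by blast
  have FpA: "F p \<in> A" and FqA: "F q \<in> A" using Fe(3) pV qV by blast+
  show ?thesis
  proof (cases "F p = F q")
    case True
    have "okL A EA F p [F p]" unfolding okL_def using FpA EArefl by auto
    then show ?thesis using okf Fm True by (intro exI[of _ A] exI[of _ EA] exI[of _ F] exI[of _ "[F p]"]) simp
  next
    case False
    define \<rho> where "\<rho> w = (if w = F q then 1 else 0::nat)" for w
    have v: "F p \<in> A" "\<rho> (F p) = 0" using FpA False unfolding \<rho>_def by auto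
    have adj: "\<rho> y \<le> Suc (\<rho> x)" for x y unfolding \<rho>_def by simp
    let ?R = "{(x, y). (x, y) \<in> EA \<and> x \<in> A \<and> y \<in> A \<and> \<rho> y = \<rho> x}"
    have prog: "\<exists>w w'. (u, w) \<in> ?R\<^sup>* \<and> w' \<in> A \<and> (w, w') \<in> EA \<and> \<rho> w' = Suc (\<rho> w)"
      if u: "u \<in> A" "\<rho> u < 1" for u
    proof (rule ccontr)
      assume neg: "\<not> ?thesis"
      define R where "R = {w. (u, w) \<in> ?R\<^sup>*}"
      have Rprop: "w \<in> A \<and> \<rho> w = 0" if "w \<in> R" for w
      proof -
        have "(u, w) \<in> ?R\<^sup>*" using that unfolding R_def by blast
        then show ?thesis
        proof (induction rule: rtrancl_induct)
          case base then show ?case using u by simp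
        next
          case (step y z) then show ?case by simp
        qed
      qed
      have uR: "u \<in> R" unfolding R_def by simp
      have qR: "F q \<notin> R" using Rprop unfolding \<rho>_def by fastforce
      have un: "R \<union> (A - R) = A" using Rprop by blast
      have int: "R \<inter> (A - R) = {}" by blast
      have c1: "closedin (subtopology (discrete_topology A) A) R" using Rprop by auto
      have c2: "closedin (subtopology (discrete_topology A) A) (A - R)" by auto
      have noe: "\<forall>y\<in>R. \<forall>z\<in>A - R. (y, z) \<notin> EA"
      proof (intro ballI notI)
        fix y z assume y: "y \<in> R" and z: "z \<in> A - R" and e: "(y, z) \<in> EA"
        have yA: "y \<in> A" "\<rho> y = 0" using Rprop[OF y] by blast+
        show False
        proof (cases "z = F q")
          case True
          then have "\<rho> z = Suc (\<rho> y)" using yA unfolding \<rho>_def by simp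
          moreover have "(u, y) \<in> ?R\<^sup>*" using y unfolding R_def by simp
          ultimately have "\<exists>w w'. (u, w) \<in> ?R\<^sup>* \<and> w' \<in> A \<and> (w, w') \<in> EA \<and> \<rho> w' = Suc (\<rho> w)"
            using z e by blast
          then show False using neg by blast
        next
          case False
          then have "\<rho> z = \<rho> y" using yA unfolding \<rho>_def by simp
          then have "(y, z) \<in> ?R" using e yA z by simp
          then have "z \<in> R" using y unfolding R_def by (simp add: rtrancl_into_rtrancl)
          then show False using z by blast
        qed
      qed
      have "R = {} \<or> A - R = {}" by (rule gconnectedD[OF Aconn un int c1 c2 noe])
      then show False using uR qR FqA by blast
    qed
    obtain W where W: "good EA A \<rho> (F p) W" "\<rho> (last W) = 1" "distinct W"
      "\<And>i j. i < j \<Longrightarrow> j < length W \<Longrightarrow> (W!i, W!j) \<in> EA \<Longrightarrow> j = Suc i"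
      using walk_lemma[of "F p" A \<rho> EA 1, OF v EArefl adj prog] by blast
    have Wg: "W \<noteq> []" "W!0 = F p" "set W \<subseteq> A"
      "\<And>i. Suc i < length W \<Longrightarrow> (W!i, W!Suc i) \<in> EA"
      using W(1) unfolding good_def by blast+
    have okL': "okL A EA F p W"
      unfolding okL_def
    proof (intro conjI allI impI)
      show "W \<noteq> []" "distinct W" "W!0 = F p" "set W \<subseteq> A" using Wg W(3) by blast+
      fix i j assume ij: "i < length W" "j < length W"
      show "(W!i, W!j) \<in> EA \<longleftrightarrow> (i \<le> Suc j \<and> j \<le> Suc i)"
      proof
        assume e': "(W!i, W!j) \<in> EA"
        show "i \<le> Suc j \<and> j \<le> Suc i"
        proof (cases i j rule: linorder_cases)
          case less then show ?thesis using W(4)[OF less ij(2) e'] by simp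
        next
          case equal then show ?thesis by simp
        next
          case greater then show ?thesis using W(4)[OF greater ij(1) EAsym[OF e']] by simp
        qed
      next
        assume a: "i \<le> Suc j \<and> j \<le> Suc i"
        show "(W!i, W!j) \<in> EA"
        proof (cases i j rule: linorder_cases)
          case less
          then have "j = Suc i" using a by simp
          then show ?thesis using Wg(4) ij by blast
        next
          case equal
          have "W!i \<in> A" using ij(1) Wg(3) nth_mem by blast
          then show ?thesis using equal EArefl by simp
        next
          case greater
          then have "i = Suc j" using a by simp
          then show ?thesis using Wg(4) ij EAsym by blast
        qed
      qed
    qed
    have "last W = F q" using W(2) unfolding \<rho>_def by (auto split: if_splits)
    then show ?thesis using okf okL' Fm by blast
  qed
qed


definition tA :: "nat set \<times> (nat \<times> nat) set \<times> ('a \<Rightarrow> nat) \<times> nat list \<Rightarrow> nat set" where "tA t = fst t"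
definition tE :: "nat set \<times> (nat \<times> nat) set \<times> ('a \<Rightarrow> nat) \<times> nat list \<Rightarrow> (nat \<times> nat) set" where "tE t = fst (snd t)"
definition tf :: "nat set \<times> (nat \<times> nat) set \<times> ('a \<Rightarrow> nat) \<times> nat list \<Rightarrow> 'a \<Rightarrow> nat" where "tf t = fst (snd (snd t))"
definition tL :: "nat set \<times> (nat \<times> nat) set \<times> ('a \<Rightarrow> nat) \<times> nat list \<Rightarrow> nat list" where "tL t = snd (snd (snd t))"

lemma tsimps [simp]: "tA (A, EA, f, L) = A" "tE (A, EA, f, L) = EA" "tf (A, EA, f, L) = f" "tL (A, EA, f, L) = L"
  unfolding tA_def tE_def tf_def tL_def by simp_all

definition Inv where
  "Inv V E p t n \<longleftrightarrow> okf V E (tA t) (tE t) (tf t) \<and> okL (tA t) (tE t) (tf t) p (tL t) \<and>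
     meshb V (tf t) (inverse (real (Suc n)))"

lemma Inv_step:
  assumes G: "is_fraisse_G V E" and pV: "p \<in> V" and I: "Inv V E p t n"
  shows "\<exists>t'. Inv V E p t' (Suc n) \<and> relL V (tf t) (tL t) (tf t') (tL t')"
proof -
  have "inverse (real (Suc (Suc n))) > 0" by simp
  then obtain A' EA' f' L' where "okf V E A' EA' f'" "okL A' EA' f' p L'"
    "meshb V f' (inverse (real (Suc (Suc n))))" "relL V (tf t) (tL t) f' L'"
    using step_lemma[OF G pV _ _ ] I unfolding Inv_def by blast
  then show ?thesis unfolding Inv_def by (intro exI[of _ "(A', EA', f', L')"]) simp
qed

lemma arc_exists:
  assumes G: "is_fraisse_G V E" and pV: "p \<in> V" and qV: "q \<in> V" and r: "r > 0"
  shows "\<exists>x \<in> arc_component (top_of_set V) E p. dist x q < r"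
proof -
  obtain A0 EA0 f0 L0 where b: "okf V E A0 EA0 f0" "okL A0 EA0 f0 p L0" "meshb V f0 (min r 1)" "last L0 = f0 q"
    using base_lemma[OF G pV qV r] by blast
  define t0 where "t0 = (A0, EA0, f0, L0)"
  have m1: "meshb V f0 (inverse (real (Suc 0)))" using b(3) unfolding meshb_def by fastforce
  have I0: "Inv V E p t0 0" unfolding Inv_def t0_def using b(1,2) m1 by simp
  define nxt where "nxt n t = (SOME t'. Inv V E p t' (Suc n) \<and> relL V (tf t) (tL t) (tf t') (tL t'))" for n t
  define seq where "seq = rec_nat t0 nxt"
  have seq0: "seq 0 = t0" unfolding seq_def by simp
  have seqS: "seq (Suc n) = nxt n (seq n)" for n unfolding seq_def by simp
  have nxtI: "Inv V E p (nxt n t) (Suc n) \<and> relL V (tf t) (tL t) (tf (nxt n t)) (tL (nxt n t))"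
    if "Inv V E p t n" for n t
    unfolding nxt_def by (rule someI_ex[OF Inv_step[OF G pV that]])
  have invs: "Inv V E p (seq n) n" for n
  proof (induction n)
    case 0 then show ?case using I0 seq0 by simp
  next
    case (Suc n) then show ?case using nxtI[OF Suc] seqS[of n] by simp
  qed
  have allI: "Inv V E p (seq n) n \<and> relL V (tf (seq n)) (tL (seq n)) (tf (seq (Suc n))) (tL (seq (Suc n)))" for n
    using invs[of n] nxtI[OF invs[of n]] seqS[of n] by simp
  define A where "A n = tA (seq n)" for n
  define EA where "EA n = tE (seq n)" for n
  define f where "f n = tf (seq n)" for n
  define L where "L n = tL (seq n)" for n
  have okf: "okf V E (A n) (EA n) (f n)" for n using allI[of n] unfolding Inv_def A_def EA_def f_def by blast
  have okl: "okL (A n) (EA n) (f n) p (L n)" for n using allI[of n] unfolding Inv_def A_def EA_def f_def L_def by blast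
  have msh: "meshb V (f n) (inverse (real (Suc n)))" for n using allI[of n] unfolding Inv_def f_def by blast
  have rel: "relL V (f n) (L n) (f (Suc n)) (L (Suc n))" for n using allI[of n] unfolding f_def L_def by blast
  have conf: "confluent (top_of_set V) E (discrete_topology (A n)) (EA n) (f n)" for n
    using okf[of n] unfolding okf_def by blast
  interpret lv: levels V E p f A EA L
  proof
    show "compact V" by (rule fraisse_compact[OF G])
    show "is_graph V E" by (rule fraisse_graph[OF G])
    show "compact E" by (rule fraisse_E_compact[OF G])
    show "\<And>n. continuous_map (top_of_set V) (discrete_topology (A n)) (f n)" using conf_epi(1)[OF conf] .
    show "\<And>n x y. (x, y) \<in> E \<Longrightarrow> (f n x, f n y) \<in> EA n" using conf_epi(2)[OF conf] .
    show "\<And>n a b. (a, b) \<in> EA n \<Longrightarrow> \<exists>x y. (x, y) \<in> E \<and> f n x = a \<and> f n y = b" using conf_epi(4)[OF conf] .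
    show "\<And>n x y. x \<in> V \<Longrightarrow> y \<in> V \<Longrightarrow> f n x = f n y \<Longrightarrow> dist x y < inverse (real (Suc n))"
      using msh unfolding meshb_def by blast
    show "\<And>n. L n \<noteq> []" "\<And>n. distinct (L n)" "\<And>n. L n ! 0 = f n p"
      using okl unfolding okL_def by blast+
    show "\<And>n. set (L n) \<subseteq> f n ` V" using okl conf_epi(3)[OF conf] unfolding okL_def by blast
    show "\<And>n i j. i < length (L n) \<Longrightarrow> j < length (L n) \<Longrightarrow>
                 (L n ! i, L n ! j) \<in> EA n \<longleftrightarrow> (i \<le> Suc j \<and> j \<le> Suc i)"
      using okl unfolding okL_def by blast
    show "p \<in> V" by (rule pV)
    show "\<And>n x. x \<in> V \<Longrightarrow> f (Suc n) x \<in> set (L (Suc n)) \<Longrightarrow> f n x \<in> set (L n)"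
      using rel unfolding relL_def by blast
    show "\<And>n x y. x \<in> V \<Longrightarrow> y \<in> V \<Longrightarrow> f (Suc n) x \<in> set (L (Suc n)) \<Longrightarrow> f (Suc n) y \<in> set (L (Suc n))
              \<Longrightarrow> idx (L (Suc n)) (f (Suc n) x) \<le> idx (L (Suc n)) (f (Suc n) y)
              \<Longrightarrow> idx (L n) (f n x) \<le> idx (L n) (f n y)"
      using rel unfolding relL_def by blast
    show "\<And>n j. j < length (L n) \<Longrightarrow> \<exists>i < length (L (Suc n)). \<forall>x\<in>V. f (Suc n) x = L (Suc n) ! i \<longrightarrow> f n x = L n ! j"
      using rel unfolding relL_def by blast
  qed
  have L0ne: "L 0 \<noteq> []" using okl[of 0] unfolding okL_def by blast
  have jl: "length (L 0) - 1 < length (L 0)" using L0ne by simp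
  obtain x where x: "x \<in> lv.S" "f 0 x = L 0 ! (length (L 0) - 1)" using lv.thread[OF jl] by blast
  have "L 0 ! (length (L 0) - 1) = last (L 0)" using L0ne by (simp add: last_conv_nth)
  moreover have "L 0 = L0" "f 0 = f0" unfolding L_def f_def using seq0 t0_def by simp_all
  ultimately have fx: "f0 x = f0 q" using x(2) b(4) by simp
  have xV: "x \<in> V" using x(1) lv.S_V by blast
  have "dist x q < min r 1" using b(3) fx xV qV unfolding meshb_def by blast
  moreover have "x \<in> arc_component (top_of_set V) E p"
    unfolding arc_component_def using lv.S_arc lv.pS x(1) by blast
  ultimately show ?thesis by force
qed

theorem mainTheorem8:
  fixes V :: "'a::metric_space set" and E :: "('a \<times> 'a) set"
  assumes "is_fraisse_G V E"
  shows "\<forall>p \<in> V. (top_of_set V) closure_of (arc_component (top_of_set V) E p) = V"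
proof
  fix p assume pV: "p \<in> V"
  let ?X = "arc_component (top_of_set V) E p"
  have XV: "?X \<subseteq> V" unfolding arc_component_def is_arc_def by auto
  have "V \<subseteq> closure ?X"
  proof
    fix q assume qV: "q \<in> V"
    show "q \<in> closure ?X" unfolding closure_approachable
      using arc_exists[OF assms pV qV] by blast
  qed
  moreover have "V \<inter> ?X = ?X" using XV by blast
  ultimately have "V \<inter> closure (V \<inter> ?X) = V" using Int_absorb2 by metis
  then show "(top_of_set V) closure_of ?X = V"
    by (simp add: closure_of_subtopology)
qed

end
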